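(* Let $W$ be an $n\times n$ row-stochastic matrix with node set $V=\{1,\dots,n\}$, and let $M\subseteq V$ be a nonempty cohesive set. Then exactly one of the following holds: (a) $\mathrm{Expansion}(M)=V$; (b) both $\mathrm{Expansion}(M)$ and $V\setminus\mathrm{Expansion}(M)$ are nonempty maximal cohesive sets.
   Context: A matrix $W=(w_{ij})_{n\times n}$ is row-stochastic if $w_{ij}\ge 0$ for all $i,j$ and $\sum_{j=1}^n w_{ij}=1$ for every $i$. A set $M\subseteq V$ is cohesive if $\sum_{j\in M} w_{ij}\ge 1/2$ for every $i\in M$. A cohesive set $M$ is maximal cohesive if there is no $i\in V\setminus M$ with $\sum_{j\in M} w_{ij}>1/2$. The cohesive expansion of $M\subseteq V$ is produced by the following procedure. Set $M_0=M$. For $k=0,1,2,\dots$: if there exists $i\in V\setminus M_k$ with $\sum_{j\in M_k} w_{ij}>1/2$, choose any such $i$ and set $M_{k+1}=M_k\cup\{i\}$. If no such $i$ exists, stop and output $M_k$. The output is denoted $\mathrm{Expansion}(M)$. It does not depend on the choices made. *)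

theory Defs
  imports Complex_Main
begin

definition row_stochastic :: "(nat \<Rightarrow> nat \<Rightarrow> real) \<Rightarrow> nat \<Rightarrow> bool" where
  "row_stochastic W n \<longleftrightarrow>
     (\<forall>i\<in>{1..n}. \<forall>j\<in>{1..n}. W i j \<ge> 0) \<and> (\<forall>i\<in>{1..n}. (\<Sum>j\<in>{1..n}. W i j) = 1)"

definition cohesive :: "(nat \<Rightarrow> nat \<Rightarrow> real) \<Rightarrow> nat \<Rightarrow> nat set \<Rightarrow> bool" where
  "cohesive W n M \<longleftrightarrow> M \<subseteq> {1..n} \<and> (\<forall>i\<in>M. (\<Sum>j\<in>M. W i j) \<ge> 1/2)"

definition maximal_cohesive :: "(nat \<Rightarrow> nat \<Rightarrow> real) \<Rightarrow> nat \<Rightarrow> nat set \<Rightarrow> bool" where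
  "maximal_cohesive W n M \<longleftrightarrow>
     cohesive W n M \<and> \<not> (\<exists>i\<in>{1..n} - M. (\<Sum>j\<in>M. W i j) > 1/2)"

definition exp_step :: "(nat \<Rightarrow> nat \<Rightarrow> real) \<Rightarrow> nat \<Rightarrow> nat set \<Rightarrow> nat set \<Rightarrow> bool" where
  "exp_step W n A B \<longleftrightarrow> (\<exists>i\<in>{1..n} - A. (\<Sum>j\<in>A. W i j) > 1/2 \<and> B = insert i A)"

definition exp_stopped :: "(nat \<Rightarrow> nat \<Rightarrow> real) \<Rightarrow> nat \<Rightarrow> nat set \<Rightarrow> bool" where
  "exp_stopped W n A \<longleftrightarrow> \<not> (\<exists>i\<in>{1..n} - A. (\<Sum>j\<in>A. W i j) > 1/2)"

text \<open>Expansion(M): the output of the procedure (a set reachable from M by steps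
  at which the procedure stops); the paper asserts this does not depend on choices.\<close>
definition Expansion :: "(nat \<Rightarrow> nat \<Rightarrow> real) \<Rightarrow> nat \<Rightarrow> nat set \<Rightarrow> nat set" where
  "Expansion W n M = (THE E. (exp_step W n)\<^sup>*\<^sup>* M E \<and> exp_stopped W n E)"

end

theory Submission
  imports Defs
begin

lemma mono_sum:
  assumes "row_stochastic W n" "i \<in> {1..n}" "A \<subseteq> B" "B \<subseteq> {1..n}"
  shows "(\<Sum>j\<in>A. W i j) \<le> (\<Sum>j\<in>B. W i j)"
proof -
  have "finite B" using assms(4) finite_subset by blast
  moreover have "\<forall>b\<in>B - A. 0 \<le> W i b" using assms unfolding row_stochastic_def by blast
  ultimately show ?thesis using sum_mono2[of B A "W i"] assms(3) by blast
qed

lemma reach_sub: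
  assumes "(exp_step W n)\<^sup>*\<^sup>* A E" "A \<subseteq> {1..n}"
  shows "E \<subseteq> {1..n}"
  using assms by (induction rule: rtranclp_induct) (auto simp: exp_step_def)

lemma reach_le_stopped:
  assumes rs: "row_stochastic W n"
    and "(exp_step W n)\<^sup>*\<^sup>* A E" "A \<subseteq> F" "F \<subseteq> {1..n}" "exp_stopped W n F"
  shows "E \<subseteq> F"
  using assms(2,3)
proof (induction rule: rtranclp_induct)
  case base then show ?case by simp
next
  case (step y z)
  then have yF: "y \<subseteq> F" by simp
  from step(2) obtain i where i: "i \<in> {1..n} - y" "(\<Sum>j\<in>y. W i j) > 1/2" "z = insert i y"
    unfolding exp_step_def by blast
  have "(\<Sum>j\<in>y. W i j) \<le> (\<Sum>j\<in>F. W i j)"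
    using mono_sum[OF rs _ yF assms(4)] i by blast
  with i have "i \<in> F" using assms(5) unfolding exp_stopped_def by force
  with yF i show ?case by simp
qed

lemma exists_stop:
  assumes "A \<subseteq> {1..n}"
  shows "\<exists>E. (exp_step W n)\<^sup>*\<^sup>* A E \<and> exp_stopped W n E"
  using assms
proof (induction "card ({1..n} - A)" arbitrary: A rule: less_induct)
  case less
  show ?case
  proof (cases "exp_stopped W n A")
    case True then show ?thesis by blast
  next
    case False
    then obtain i where i: "i \<in> {1..n} - A" "(\<Sum>j\<in>A. W i j) > 1/2"
      unfolding exp_stopped_def by blast
    have st: "exp_step W n A (insert i A)" using i unfolding exp_step_def by blast
    have "card ({1..n} - insert i A) < card ({1..n} - A)"
    proof (rule psubset_card_mono)
      show "finite ({1..n} - A)" by simp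
      show "{1..n} - insert i A \<subset> {1..n} - A" using i by blast
    qed
    moreover have "insert i A \<subseteq> {1..n}" using i less.prems by auto
    ultimately obtain E where "(exp_step W n)\<^sup>*\<^sup>* (insert i A) E \<and> exp_stopped W n E"
      using less.hyps by blast
    then show ?thesis using st by (meson converse_rtranclp_into_rtranclp)
  qed
qed

lemma reach_cohesive:
  assumes rs: "row_stochastic W n"
    and "(exp_step W n)\<^sup>*\<^sup>* A E" "cohesive W n A"
  shows "cohesive W n E"
  using assms(2,3)
proof (induction rule: rtranclp_induct)
  case base then show ?case by simp
next
  case (step y z)
  then have coh: "cohesive W n y" by simp
  from step(2) obtain i where i: "i \<in> {1..n} - y" "(\<Sum>j\<in>y. W i j) > 1/2" "z = insert i y"
    unfolding exp_step_def by blast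
  have zsub: "z \<subseteq> {1..n}" using i coh unfolding cohesive_def by auto
  have "\<forall>k\<in>z. (\<Sum>j\<in>z. W k j) \<ge> 1/2"
  proof
    fix k assume k: "k \<in> z"
    have kn: "k \<in> {1..n}" using k zsub by auto
    have le: "(\<Sum>j\<in>y. W k j) \<le> (\<Sum>j\<in>z. W k j)"
      using mono_sum[OF rs kn _ zsub] i by blast
    show "(\<Sum>j\<in>z. W k j) \<ge> 1/2"
    proof (cases "k = i")
      case True then show ?thesis using le i by simp
    next
      case False then have "k \<in> y" using k i by auto
      then show ?thesis using le coh unfolding cohesive_def by force
    qed
  qed
  then show ?case using zsub unfolding cohesive_def by simp
qed

theorem lemmaA1:
  fixes W :: "nat \<Rightarrow> nat \<Rightarrow> real" and n :: nat and M :: "nat set"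
  assumes "row_stochastic W n"
    and "M \<subseteq> {1..n}" and "M \<noteq> {}"
    and "cohesive W n M"
  shows "(Expansion W n M = {1..n}
           \<or> (Expansion W n M \<noteq> {} \<and> {1..n} - Expansion W n M \<noteq> {}
              \<and> maximal_cohesive W n (Expansion W n M)
              \<and> maximal_cohesive W n ({1..n} - Expansion W n M)))
      \<and> \<not> (Expansion W n M = {1..n}
           \<and> (Expansion W n M \<noteq> {} \<and> {1..n} - Expansion W n M \<noteq> {}
              \<and> maximal_cohesive W n (Expansion W n M)
              \<and> maximal_cohesive W n ({1..n} - Expansion W n M)))"
proof -
  obtain E where E: "(exp_step W n)\<^sup>*\<^sup>* M E" "exp_stopped W n E"
    using exists_stop[OF assms(2)] by blast
  have Esub: "E \<subseteq> {1..n}" using reach_sub[OF E(1) assms(2)] .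
  have uniq: "E' = E" if "(exp_step W n)\<^sup>*\<^sup>* M E'" "exp_stopped W n E'" for E'
  proof -
    have E'sub: "E' \<subseteq> {1..n}" using reach_sub[OF that(1) assms(2)] .
    have "M \<subseteq> E" using E(1) by (induction rule: rtranclp_induct) (auto simp: exp_step_def)
    have "M \<subseteq> E'" using that(1) by (induction rule: rtranclp_induct) (auto simp: exp_step_def)
    show ?thesis
      using reach_le_stopped[OF assms(1) that(1) \<open>M \<subseteq> E\<close> Esub E(2)]
        reach_le_stopped[OF assms(1) E(1) \<open>M \<subseteq> E'\<close> E'sub that(2)] by blast
  qed
  have Ex: "Expansion W n M = E"
    unfolding Expansion_def
  proof (rule the_equality)
    show "(exp_step W n)\<^sup>*\<^sup>* M E \<and> exp_stopped W n E" using E by blast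
    show "\<And>E'. (exp_step W n)\<^sup>*\<^sup>* M E' \<and> exp_stopped W n E' \<Longrightarrow> E' = E"
      using uniq by blast
  qed
  have ME: "M \<subseteq> E"
    using E(1) by (induction rule: rtranclp_induct) (auto simp: exp_step_def)
  have cohE: "cohesive W n E" using reach_cohesive[OF assms(1) E(1) assms(4)] .
  have maxE: "maximal_cohesive W n E"
    using cohE E(2) unfolding maximal_cohesive_def exp_stopped_def by blast
  define C where "C = {1..n} - E"
  have split: "(\<Sum>j\<in>{1..n}. W i j) = (\<Sum>j\<in>C. W i j) + (\<Sum>j\<in>E. W i j)" for i
    unfolding C_def using sum.subset_diff[OF Esub, of "W i"] by simp
  have tot: "(\<Sum>j\<in>C. W i j) + (\<Sum>j\<in>E. W i j) = 1" if "i \<in> {1..n}" for i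
    using split[of i] assms(1) that unfolding row_stochastic_def by simp
  have cohC: "cohesive W n C"
    unfolding cohesive_def
  proof (intro conjI ballI)
    show "C \<subseteq> {1..n}" unfolding C_def by auto
  next
    fix i assume i: "i \<in> C"
    then have "\<not> (\<Sum>j\<in>E. W i j) > 1/2" using E(2) unfolding exp_stopped_def C_def by blast
    then show "(\<Sum>j\<in>C. W i j) \<ge> 1/2" using tot[of i] i unfolding C_def by auto
  qed
  have maxC: "maximal_cohesive W n C"
    unfolding maximal_cohesive_def
  proof (intro conjI cohC notI)
    assume "\<exists>i\<in>{1..n} - C. (\<Sum>j\<in>C. W i j) > 1/2"
    then obtain i where i: "i \<in> {1..n} - C" "(\<Sum>j\<in>C. W i j) > 1/2" by blast
    then have "i \<in> E" unfolding C_def by auto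
    then have "(\<Sum>j\<in>E. W i j) \<ge> 1/2" using cohE unfolding cohesive_def by blast
    then show False using tot[of i] i by auto
  qed
  have Ene: "E \<noteq> {}" using ME assms(3) by auto
  have "E = {1..n} \<or> C \<noteq> {}" unfolding C_def using Esub by blast
  moreover have "E = {1..n} \<Longrightarrow> C = {}" unfolding C_def by blast
  ultimately show ?thesis
    unfolding Ex C_def[symmetric] using maxE maxC Ene by blast
qed

end
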